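(* For each infinite cardinal $\kappa$ there is a crowded (i.e. without isolated points) regular space of size $2^\kappa$ which has a $\kappa$-deep $\pi$-base.
   Context: A $\pi$-base $\mathcal{U}$ of a space is $\kappa$-deep if for every decreasing sequence $\{U_\alpha\}_{\alpha<\kappa}\subseteq\mathcal{U}$ the set $\bigcap_{\alpha<\kappa}U_\alpha$ has nonempty interior. *)

theory Defs
  imports "HOL-Analysis.Analysis" "HOL-Library.Equipollence"
begin

definition crowded :: "'a topology \<Rightarrow> bool" where
  "crowded X \<longleftrightarrow> (\<forall>x\<in>topspace X. \<not> openin X {x})"

definition pi_base :: "'a topology \<Rightarrow> 'a set set \<Rightarrow> bool" where
  "pi_base X \<U> \<longleftrightarrow> (\<forall>U\<in>\<U>. openin X U \<and> U \<noteq> {}) \<and>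
     (\<forall>V. openin X V \<and> V \<noteq> {} \<longrightarrow> (\<exists>U\<in>\<U>. U \<subseteq> V))"

text \<open>kappa-deep pi-base, where the cardinal kappa is given as a cardinal well-order r
  (an initial ordinal); the indices alpha < kappa range over Field r ordered by r.\<close>
definition deep_pi_base :: "('k \<times> 'k) set \<Rightarrow> 'a topology \<Rightarrow> 'a set set \<Rightarrow> bool" where
  "deep_pi_base r X \<U> \<longleftrightarrow> pi_base X \<U> \<and>
     (\<forall>U :: 'k \<Rightarrow> 'a set.
        (\<forall>\<alpha>\<in>Field r. U \<alpha> \<in> \<U>) \<and> (\<forall>\<alpha> \<beta>. (\<alpha>, \<beta>) \<in> r \<longrightarrow> U \<beta> \<subseteq> U \<alpha>)
        \<longrightarrow> X interior_of (\<Inter>\<alpha>\<in>Field r. U \<alpha>) \<noteq> {})"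

end

theory Submission
  imports Defs
begin

unbundle cardinal_syntax

lemma lep_UN:
  assumes "infinite F" "I \<lesssim> F" "\<And>i. i \<in> I \<Longrightarrow> A i \<lesssim> F"
  shows "(\<Union>i\<in>I. A i) \<lesssim> F"
proof -
  have "|\<Union>i\<in>I. A i| \<le>o |F|"
    using assms card_of_UNION_ordLeq_infinite[of F I A] card_of_ordLeq by (metis lepoll_def)
  then show ?thesis using card_of_ordLeq lepoll_def by metis
qed

lemma lep_Un:
  assumes "infinite F" "A \<lesssim> F" "B \<lesssim> F"
  shows "A \<union> B \<lesssim> F"
proof -
  have "A \<union> B = (\<Union>i\<in>{True,False}. if i then A else B)" by auto
  also have "\<dots> \<lesssim> F"
    by (rule lep_UN) (use assms finite_lepoll_infinite[OF assms(1), of "{True,False}"] in auto)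
  finally show ?thesis .
qed

definition SS :: "'k set \<Rightarrow> 'k set set set" where
  "SS F = {y. y \<subseteq> Pow F \<and> y \<lesssim> F \<and> {} \<in> y}"

lemma SS_eqpoll:
  assumes inf: "infinite F"
  shows "SS F \<approx> Pow F"
proof (rule lepoll_antisym)
  show "Pow F \<lesssim> SS F"
    unfolding lepoll_def
  proof (intro exI conjI)
    show "inj_on (\<lambda>A. {{},A}) (Pow F)"
      by (auto simp: inj_on_def doubleton_eq_iff)
    show "(\<lambda>A. {{},A}) ` Pow F \<subseteq> SS F"
      proof
      fix y assume "y \<in> (\<lambda>A. {{},A}) ` Pow F"
      then obtain A where A: "A \<subseteq> F" "y = {{},A}" by blast
      have "finite y" using A by simp
      then have "y \<lesssim> F" using finite_lepoll_infinite[OF inf] by blast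
      then show "y \<in> SS F" using A by (simp add: SS_def)
    qed
  qed
next
  have "\<forall>y\<in>SS F. \<exists>g. (\<forall>\<xi>\<in>F. g \<xi> \<in> y) \<and> y \<subseteq> g ` F"
  proof
    fix y assume "y \<in> SS F"
    then have y: "y \<lesssim> F" "{} \<in> y" by (auto simp: SS_def)
    then obtain g where g: "y \<subseteq> g ` F" unfolding lepoll_iff by blast
    define g' where "g' = (\<lambda>\<xi>. if g \<xi> \<in> y then g \<xi> else {})"
    have "\<forall>\<xi>\<in>F. g' \<xi> \<in> y" using y by (auto simp: g'_def)
    moreover have "y \<subseteq> g' ` F"
    proof
      fix x assume x: "x \<in> y"
      then obtain \<xi> where xi: "\<xi> \<in> F" "x = g \<xi>" using g by blast
      then have "g' \<xi> = x" using x by (simp add: g'_def)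
      then show "x \<in> g' ` F" using xi(1) by blast
    qed
    ultimately show "\<exists>g. (\<forall>\<xi>\<in>F. g \<xi> \<in> y) \<and> y \<subseteq> g ` F" by blast
  qed
  from bchoice[OF this] obtain G where G0: "\<forall>y\<in>SS F. (\<forall>\<xi>\<in>F. G y \<xi> \<in> y) \<and> y \<subseteq> G y ` F"
    by blast
  have G: "(\<forall>\<xi>\<in>F. G y \<xi> \<in> y) \<and> y \<subseteq> G y ` F" if "y \<in> SS F" for y
    using G0 that by blast
  have Gim: "y = G y ` F" if "y \<in> SS F" for y using G[OF that] by blast
  have Gsub: "G y \<xi> \<subseteq> F" if "y \<in> SS F" "\<xi> \<in> F" for y \<xi>
    using G[OF that(1)] that by (auto simp: SS_def)
  define E where "E y = {(\<xi>,a). \<xi> \<in> F \<and> a \<in> G y \<xi>}" for y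
  have Erec: "G y \<xi> = {a. (\<xi>,a) \<in> E y}" if "y \<in> SS F" "\<xi> \<in> F" for y \<xi>
    using Gsub[OF that] that by (auto simp: E_def)
  have "inj_on E (SS F)"
  proof (rule inj_onI)
    fix y1 y2 assume y: "y1 \<in> SS F" "y2 \<in> SS F" "E y1 = E y2"
    have "G y1 ` F = G y2 ` F"
      by (rule image_cong) (use y Erec in auto)
    then show "y1 = y2" using Gim y by metis
  qed
  moreover have "E ` SS F \<subseteq> Pow (F \<times> F)" using Gsub by (auto simp: E_def)
  ultimately have 1: "SS F \<lesssim> Pow (F \<times> F)" unfolding lepoll_def by blast
  have "|F \<times> F| =o |F|" by (rule card_of_Times_same_infinite[OF inf])
  then have "|F \<times> F| \<le>o |F|" by (simp add: ordIso_iff_ordLeq)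
  then obtain h where h: "inj_on h (F \<times> F)" "h ` (F \<times> F) \<subseteq> F"
    unfolding card_of_ordLeq[symmetric] by blast
  have "Pow (F \<times> F) \<lesssim> Pow F"
    unfolding lepoll_def
  proof (intro exI[of _ "image h"] conjI)
    show "inj_on (image h) (Pow (F \<times> F))" by (rule inj_on_image_Pow[OF h(1)])
    show "image h ` Pow (F \<times> F) \<subseteq> Pow F" using h(2) by blast
  qed
  with 1 show "SS F \<lesssim> Pow F" using lepoll_trans by blast
qed


definition NB :: "'k set \<Rightarrow> ('k set \<Rightarrow> 'k set set) \<Rightarrow> 'k set set \<Rightarrow> 'k set \<Rightarrow> 'k set set" where
  "NB F c T p = {q \<in> Pow F. c q \<inter> T = c p \<inter> T}"

definition OP :: "'k set \<Rightarrow> ('k set \<Rightarrow> 'k set set) \<Rightarrow> 'k set set \<Rightarrow> bool" where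
  "OP F c U \<longleftrightarrow> U \<subseteq> Pow F \<and> (\<forall>p\<in>U. \<exists>T. T \<lesssim> F \<and> NB F c T p \<subseteq> U)"

lemma NB_self: "p \<in> Pow F \<Longrightarrow> p \<in> NB F c T p"
  by (simp add: NB_def)

lemma NB_mono:
  assumes "T' \<subseteq> T" shows "NB F c T p \<subseteq> NB F c T' p"
proof
  fix q assume "q \<in> NB F c T p"
  then have q: "q \<in> Pow F" "c q \<inter> T = c p \<inter> T" by (auto simp: NB_def)
  have "c q \<inter> T' = c q \<inter> T \<inter> T'" using assms by blast
  also have "\<dots> = c p \<inter> T \<inter> T'" using q(2) by simp
  also have "\<dots> = c p \<inter> T'" using assms by blast
  finally show "q \<in> NB F c T' p" using q(1) by (simp add: NB_def)
qed

lemma NB_eq: "q \<in> NB F c T p \<Longrightarrow> NB F c T q = NB F c T p"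
  unfolding NB_def by simp

lemma OP_NB: "OP F c (NB F c T p)" if "T \<lesssim> F"
  unfolding OP_def
proof (intro conjI ballI)
  show "NB F c T p \<subseteq> Pow F" unfolding NB_def by blast
  fix q assume "q \<in> NB F c T p"
  then have "NB F c T q \<subseteq> NB F c T p" by (simp add: NB_eq)
  then show "\<exists>T'. T' \<lesssim> F \<and> NB F c T' q \<subseteq> NB F c T p" using that by (intro exI[of _ T] conjI)
qed

lemma istop: assumes "infinite F" shows "istopology (OP F c)"
  unfolding istopology_def
proof (intro conjI allI impI)
  fix S T assume S: "OP F c S" and T: "OP F c T"
  show "OP F c (S \<inter> T)"
    unfolding OP_def
  proof (intro conjI ballI)
    show "S \<inter> T \<subseteq> Pow F" using S unfolding OP_def by blast
    fix p assume p: "p \<in> S \<inter> T"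
    have "p \<in> S" "p \<in> T" using p by auto
    then obtain T1 where T1: "T1 \<lesssim> F" "NB F c T1 p \<subseteq> S"
      using S unfolding OP_def by meson
    obtain T2 where T2: "T2 \<lesssim> F" "NB F c T2 p \<subseteq> T"
      using T \<open>p \<in> T\<close> unfolding OP_def by meson
    have u: "T1 \<union> T2 \<lesssim> F" using lep_Un[OF assms T1(1) T2(1)] .
    have "NB F c (T1 \<union> T2) p \<subseteq> NB F c T1 p" "NB F c (T1 \<union> T2) p \<subseteq> NB F c T2 p"
      by (rule NB_mono, blast)+
    then have "NB F c (T1 \<union> T2) p \<subseteq> S \<inter> T" using T1(2) T2(2) by blast
    then show "\<exists>T'. T' \<lesssim> F \<and> NB F c T' p \<subseteq> S \<inter> T" using u by blast
  qed
next
  fix K assume K: "\<forall>U\<in>K. OP F c U"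
  show "OP F c (\<Union>K)"
    unfolding OP_def
  proof (intro conjI ballI)
    show "\<Union>K \<subseteq> Pow F" using K unfolding OP_def by blast
    fix p assume "p \<in> \<Union>K"
    then obtain U where U: "U \<in> K" "p \<in> U" by blast
    then have "OP F c U" using K by blast
    then obtain T where "T \<lesssim> F" "NB F c T p \<subseteq> U" using U(2) unfolding OP_def by meson
    then show "\<exists>T. T \<lesssim> F \<and> NB F c T p \<subseteq> \<Union>K" using U(1) by blast
  qed
qed


lemma finlep: "infinite F \<Longrightarrow> finite A \<Longrightarrow> A \<lesssim> F"
  using finite_lepoll_infinite by blast

lemma topsp:
  assumes "infinite F"
  shows "topspace (topology (OP F c)) = Pow F"
proof -
  have o: "openin (topology (OP F c)) = OP F c" using istop[OF assms] by simp
  have "NB F c {} p \<subseteq> Pow F" for p by (auto simp: NB_def)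
  then have "OP F c (Pow F)"
    unfolding OP_def using empty_lepoll by blast
  then have "openin (topology (OP F c)) (Pow F)" using o by simp
  then have "Pow F \<subseteq> topspace (topology (OP F c))" by (rule openin_subset)
  moreover have "topspace (topology (OP F c)) \<subseteq> Pow F"
    unfolding topspace_def o OP_def by blast
  ultimately show ?thesis by blast
qed

context
  fixes F :: "'k set" and c :: "'k set \<Rightarrow> 'k set set"
  assumes inf: "infinite F" and bij: "bij_betw c (Pow F) (SS F)"
begin

lemma op_iff: "openin (topology (OP F c)) U \<longleftrightarrow> OP F c U"
  by (simp only: topology_inverse'[OF istop[OF inf]])

lemma top: "topspace (topology (OP F c)) = Pow F"
  by (rule topsp[OF inf])

lemma cSS: "p \<in> Pow F \<Longrightarrow> c p \<in> SS F"
  using bij_betwE[OF bij] by blast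

lemma cinj: "p \<in> Pow F \<Longrightarrow> q \<in> Pow F \<Longrightarrow> c p = c q \<Longrightarrow> p = q"
  by (rule inj_onD[OF bij_betw_imp_inj_on[OF bij]])

lemma csurj: assumes "y \<in> SS F" shows "\<exists>q\<in>Pow F. c q = y"
proof -
  have "y \<in> c ` Pow F" using assms unfolding bij_betw_imp_surj_on[OF bij] .
  then obtain q where "q \<in> Pow F" "y = c q" by (rule imageE)
  then show ?thesis by blast
qed

lemma crowdedX: "crowded (topology (OP F c))"
  unfolding crowded_def top
proof (intro ballI notI)
  fix p assume p: "p \<in> Pow F" and o: "openin (topology (OP F c)) {p}"
  then have "OP F c {p}" by (simp add: op_iff)
  then have "\<exists>T. T \<lesssim> F \<and> NB F c T p \<subseteq> {p}" unfolding OP_def by blast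
  then obtain T where T: "T \<lesssim> F" "NB F c T p \<subseteq> {p}" by blast
  have iT: "{{}} \<union> T \<lesssim> F" by (rule lep_Un[OF inf finlep[OF inf] T(1)]) simp
  have "\<not> Pow F \<subseteq> {{}} \<union> T"
  proof
    assume sub: "Pow F \<subseteq> {{}} \<union> T"
    have "Pow F \<lesssim> F" by (rule lepoll_trans[OF subset_imp_lepoll[OF sub] iT])
    then show False by (meson lesspoll_Pow_self lesspoll_trans2 lesspoll_not_refl)
  qed
  then obtain i where i0: "i \<in> Pow F" "i \<notin> {{}} \<union> T" by (meson subsetI)
  then have i: "i \<in> Pow F" "i \<notin> T" "i \<noteq> {}" by simp_all
  define y where "y = (c p - {i}) \<union> ({i} - c p)"
  have cp: "c p \<in> SS F" using cSS p by blast
  have cp2: "c p \<subseteq> Pow F" "c p \<lesssim> F" "{} \<in> c p" using cp unfolding SS_def by simp_all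
  have "y \<subseteq> c p \<union> {i}" unfolding y_def by blast
  moreover have "c p \<union> {i} \<lesssim> F"
    by (rule lep_Un[OF inf cp2(2) finlep[OF inf]]) simp
  ultimately have "y \<lesssim> F" using subset_imp_lepoll lepoll_trans by blast
  moreover have "y \<subseteq> Pow F" using cp2(1) i(1) unfolding y_def by blast
  moreover have "{} \<in> y" using cp2(3) i(3) unfolding y_def by blast
  ultimately have "y \<in> SS F" unfolding SS_def by blast
  then obtain q where q: "q \<in> Pow F" "c q = y" using csurj by blast
  have "y \<inter> T = c p \<inter> T" using i(2) unfolding y_def by blast
  then have "q \<in> NB F c T p" using q unfolding NB_def by simp
  then have "q = p" using T(2) by blast
  then have "y = c p" using q(2) by simp
  moreover have "i \<in> y \<longleftrightarrow> i \<notin> c p" unfolding y_def by blast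
  ultimately show False by blast
qed

lemma t1X: "t1_space (topology (OP F c))"
  unfolding t1_space_def top
proof (intro ballI impI)
  fix p q assume p: "p \<in> Pow F" and q: "q \<in> Pow F" and ne: "p \<noteq> q"
  then have "c p \<noteq> c q" using cinj by blast
  then obtain i where i: "(i \<in> c p) \<noteq> (i \<in> c q)" by blast
  have o: "openin (topology (OP F c)) (NB F c {i} p)"
    unfolding op_iff by (rule OP_NB) (rule finlep[OF inf], simp)
  have "p \<in> NB F c {i} p" using p by (rule NB_self)
  moreover have "q \<notin> NB F c {i} p" using i by (auto simp: NB_def)
  ultimately show "\<exists>U. openin (topology (OP F c)) U \<and> p \<in> U \<and> q \<notin> U" using o by blast
qed

lemma regX: "regular_space (topology (OP F c))"
  unfolding regular_space_def
proof (intro allI impI)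
  fix C a assume H: "closedin (topology (OP F c)) C \<and> a \<in> topspace (topology (OP F c)) - C"
  then have C: "C \<subseteq> Pow F" "openin (topology (OP F c)) (Pow F - C)" and a: "a \<in> Pow F - C"
    by (auto simp: closedin_def top)
  then have "OP F c (Pow F - C)" by (simp add: op_iff)
  then obtain T where T: "T \<lesssim> F" "NB F c T a \<subseteq> Pow F - C" using a unfolding OP_def by meson
  define V where "V = Pow F - NB F c T a"
  have "OP F c V" unfolding OP_def
  proof (intro conjI ballI)
    show "V \<subseteq> Pow F" by (auto simp: V_def)
    fix q assume q: "q \<in> V"
    have "NB F c T q \<subseteq> V"
    proof
      fix x assume x: "x \<in> NB F c T q"
      have "x \<notin> NB F c T a"
      proof
        assume "x \<in> NB F c T a"
        then have "NB F c T x = NB F c T a" by (rule NB_eq)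
        moreover have "NB F c T x = NB F c T q" using x by (rule NB_eq)
        moreover have "q \<in> NB F c T q" using q unfolding V_def by (blast intro: NB_self)
        ultimately show False using q by (simp add: V_def)
      qed
      then show "x \<in> V" using x unfolding V_def NB_def by blast
    qed
    then show "\<exists>T'. T' \<lesssim> F \<and> NB F c T' q \<subseteq> V" using T(1) by blast
  qed
  then have oV: "openin (topology (OP F c)) V" by (simp add: op_iff)
  have oU: "openin (topology (OP F c)) (NB F c T a)" unfolding op_iff by (rule OP_NB[OF T(1)])
  have "a \<in> NB F c T a" using a by (blast intro: NB_self)
  moreover have "C \<subseteq> V" using C(1) T(2) by (auto simp: V_def)
  moreover have "disjnt (NB F c T a) V" by (auto simp: V_def disjnt_def)
  ultimately show "\<exists>U V. openin (topology (OP F c)) U \<and> openin (topology (OP F c)) V \<and> a \<in> U \<and> C \<subseteq> V \<and> disjnt U V"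
    using oU oV by blast
qed

lemma deepX:
  fixes r :: "('k \<times> 'k) set"
  assumes r: "Card_order r" "Field r = F"
  shows "deep_pi_base r (topology (OP F c)) {NB F c T p | T p. T \<lesssim> F \<and> p \<in> Pow F}"
proof -
  let ?X = "topology (OP F c)"
  let ?U = "{NB F c T p | T p. T \<lesssim> F \<and> p \<in> Pow F}"
  have pb: "pi_base ?X ?U"
    unfolding pi_base_def
  proof (intro conjI)
    show "\<forall>U\<in>?U. openin ?X U \<and> U \<noteq> {}"
    proof
    fix U assume "U \<in> ?U"
    then obtain T p where Tp: "T \<lesssim> F" "p \<in> Pow F" "U = NB F c T p" by blast
    have "openin ?X U" unfolding op_iff Tp(3) by (rule OP_NB[OF Tp(1)])
    moreover have "p \<in> U" unfolding Tp(3) using Tp(2) by (rule NB_self)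
    ultimately show "openin ?X U \<and> U \<noteq> {}" by blast
    qed
  next
    show "\<forall>V. openin ?X V \<and> V \<noteq> {} \<longrightarrow> (\<exists>U\<in>?U. U \<subseteq> V)"
    proof (intro allI impI)
    fix V assume V: "openin ?X V \<and> V \<noteq> {}"
    then obtain p where p: "p \<in> V" by blast
    have OV: "OP F c V" using V op_iff by blast
    then obtain T where T: "T \<lesssim> F" "NB F c T p \<subseteq> V" using p unfolding OP_def by meson
    have "p \<in> Pow F" using OV p unfolding OP_def by blast
    then have "NB F c T p \<in> ?U" using T(1) by blast
    then show "\<exists>U\<in>?U. U \<subseteq> V" using T(2) by blast
    qed
  qed
  have wo: "well_order_on F r" using card_order_on_well_order_on r by metis
  have tot: "total_on F r" using wo unfolding well_order_on_def linear_order_on_def by blast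
  show ?thesis
    unfolding deep_pi_base_def
  proof (intro conjI allI impI pb)
    fix U :: "'k \<Rightarrow> 'k set set"
    assume H: "(\<forall>\<alpha>\<in>Field r. U \<alpha> \<in> ?U) \<and> (\<forall>\<alpha> \<beta>. (\<alpha>, \<beta>) \<in> r \<longrightarrow> U \<beta> \<subseteq> U \<alpha>)"
    have "\<forall>\<alpha>\<in>F. \<exists>Tp. fst Tp \<lesssim> F \<and> snd Tp \<in> Pow F \<and> U \<alpha> = NB F c (fst Tp) (snd Tp)"
    proof
      fix \<alpha> assume "\<alpha> \<in> F"
      then have "U \<alpha> \<in> ?U" using H r(2) by blast
      then obtain T p where "T \<lesssim> F" "p \<in> Pow F" "U \<alpha> = NB F c T p" by blast
      then show "\<exists>Tp. fst Tp \<lesssim> F \<and> snd Tp \<in> Pow F \<and> U \<alpha> = NB F c (fst Tp) (snd Tp)"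
        by (intro exI[of _ "(T,p)"]) simp
    qed
    from bchoice[OF this] obtain f where
      f: "\<forall>\<alpha>\<in>F. fst (f \<alpha>) \<lesssim> F \<and> snd (f \<alpha>) \<in> Pow F \<and> U \<alpha> = NB F c (fst (f \<alpha>)) (snd (f \<alpha>))"
      by blast
    define Ta where "Ta = (\<lambda>\<alpha>. fst (f \<alpha>))"
    define Pa where "Pa = (\<lambda>\<alpha>. snd (f \<alpha>))"
    have TP: "Ta \<alpha> \<lesssim> F" "Pa \<alpha> \<in> Pow F" "U \<alpha> = NB F c (Ta \<alpha>) (Pa \<alpha>)" if "\<alpha> \<in> F" for \<alpha>
      using f that unfolding Ta_def Pa_def by blast+
    define TT where "TT = (\<Union>\<alpha>\<in>F. Ta \<alpha>)"
    have TT: "TT \<lesssim> F" unfolding TT_def by (rule lep_UN[OF inf lepoll_refl]) (rule TP(1))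
    define w where "w = {{}} \<union> (\<Union>\<alpha>\<in>F. c (Pa \<alpha>) \<inter> Ta \<alpha>)"
    have cP: "c (Pa \<alpha>) \<in> SS F" if "\<alpha> \<in> F" for \<alpha> using cSS TP(2) that by blast
    have "w \<subseteq> {{}} \<union> TT" unfolding w_def TT_def by blast
    moreover have "{{}} \<union> TT \<lesssim> F" by (rule lep_Un[OF inf finlep[OF inf] TT]) simp
    ultimately have w1: "w \<lesssim> F" using subset_imp_lepoll lepoll_trans by blast
    have w2: "w \<subseteq> Pow F"
    proof
      fix x assume "x \<in> w"
      then show "x \<in> Pow F"
      proof (cases "x = {}")
        case False
        then obtain \<alpha> where "\<alpha> \<in> F" "x \<in> c (Pa \<alpha>)" using \<open>x \<in> w\<close> unfolding w_def by blast
        then show ?thesis using cP unfolding SS_def by blast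
      qed simp
    qed
    have "w \<in> SS F" using w1 w2 by (simp add: SS_def w_def)
    then obtain pw where pw: "pw \<in> Pow F" "c pw = w" using csurj by blast
    have key: "w \<inter> Ta \<alpha> = c (Pa \<alpha>) \<inter> Ta \<alpha>" if \<alpha>: "\<alpha> \<in> F" for \<alpha>
    proof
      show "c (Pa \<alpha>) \<inter> Ta \<alpha> \<subseteq> w \<inter> Ta \<alpha>" using \<alpha> unfolding w_def by blast
      show "w \<inter> Ta \<alpha> \<subseteq> c (Pa \<alpha>) \<inter> Ta \<alpha>"
      proof
        fix x assume x: "x \<in> w \<inter> Ta \<alpha>"
        show "x \<in> c (Pa \<alpha>) \<inter> Ta \<alpha>"
        proof (cases "x = {}")
          case True then show ?thesis using x cP[OF \<alpha>] by (simp add: SS_def)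
        next
          case False
          then obtain \<beta> where \<beta>: "\<beta> \<in> F" "x \<in> c (Pa \<beta>)" "x \<in> Ta \<beta>"
            using x unfolding w_def by blast
          have "x \<in> c (Pa \<alpha>)"
          proof (cases "\<alpha> = \<beta>")
            case True then show ?thesis using \<beta> by simp
          next
            case False
            then have "(\<alpha>,\<beta>) \<in> r \<or> (\<beta>,\<alpha>) \<in> r" using tot \<alpha> \<beta>(1) unfolding total_on_def by blast
            then show ?thesis
            proof
              assume "(\<alpha>,\<beta>) \<in> r"
              then have "U \<beta> \<subseteq> U \<alpha>" using H by blast
              moreover have "Pa \<beta> \<in> U \<beta>" using TP[OF \<beta>(1)] NB_self by simp
              ultimately have "Pa \<beta> \<in> NB F c (Ta \<alpha>) (Pa \<alpha>)" using TP[OF \<alpha>] by blast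
              then have "c (Pa \<beta>) \<inter> Ta \<alpha> = c (Pa \<alpha>) \<inter> Ta \<alpha>" by (simp add: NB_def)
              then show ?thesis using \<beta>(2) x by blast
            next
              assume "(\<beta>,\<alpha>) \<in> r"
              then have "U \<alpha> \<subseteq> U \<beta>" using H by blast
              moreover have "Pa \<alpha> \<in> U \<alpha>" using TP[OF \<alpha>] NB_self by simp
              ultimately have "Pa \<alpha> \<in> NB F c (Ta \<beta>) (Pa \<beta>)" using TP[OF \<beta>(1)] by blast
              then have "c (Pa \<alpha>) \<inter> Ta \<beta> = c (Pa \<beta>) \<inter> Ta \<beta>" by (simp add: NB_def)
              then show ?thesis using \<beta>(2,3) by blast
            qed
          qed
          then show ?thesis using x by blast
        qed
      qed
    qed
    have sub: "NB F c TT pw \<subseteq> (\<Inter>\<alpha>\<in>Field r. U \<alpha>)"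
    proof
      fix q assume q: "q \<in> NB F c TT pw"
      then have q1: "q \<in> Pow F" "c q \<inter> TT = w \<inter> TT" using pw by (auto simp: NB_def)
      show "q \<in> (\<Inter>\<alpha>\<in>Field r. U \<alpha>)"
      proof
        fix \<alpha> assume "\<alpha> \<in> Field r"
        then have \<alpha>: "\<alpha> \<in> F" using r(2) by simp
        have s: "Ta \<alpha> \<subseteq> TT" using \<alpha> unfolding TT_def by blast
        have "c q \<inter> Ta \<alpha> = c q \<inter> TT \<inter> Ta \<alpha>" using s by blast
        also have "\<dots> = w \<inter> TT \<inter> Ta \<alpha>" using q1(2) by simp
        also have "\<dots> = w \<inter> Ta \<alpha>" using s by blast
        also have "\<dots> = c (Pa \<alpha>) \<inter> Ta \<alpha>" by (rule key[OF \<alpha>])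
        finally have "q \<in> NB F c (Ta \<alpha>) (Pa \<alpha>)" using q1(1) by (simp add: NB_def)
        then show "q \<in> U \<alpha>" using TP[OF \<alpha>] by simp
      qed
    qed
    have "openin ?X (NB F c TT pw)" unfolding op_iff by (rule OP_NB[OF TT])
    with sub have "NB F c TT pw \<subseteq> ?X interior_of (\<Inter>\<alpha>\<in>Field r. U \<alpha>)"
      by (rule interior_of_maximal)
    moreover have "pw \<in> NB F c TT pw" using pw(1) by (rule NB_self)
    ultimately show "?X interior_of (\<Inter>\<alpha>\<in>Field r. U \<alpha>) \<noteq> {}" by blast
  qed
qed

end

theorem lemma4p1:
  fixes r :: "('k \<times> 'k) set"
  assumes "Card_order r" and "infinite (Field r)"
  shows "\<exists>X :: 'k set topology. topspace X \<approx> Pow (Field r) \<and> crowded X \<and>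
           t1_space X \<and> regular_space X \<and> (\<exists>\<U>. deep_pi_base r X \<U>)"
proof -
  let ?F = "Field r"
  have "Pow ?F \<approx> SS ?F" using SS_eqpoll[OF assms(2)] eqpoll_sym by blast
  then obtain c where c: "bij_betw c (Pow ?F) (SS ?F)" unfolding eqpoll_def by blast
  let ?X = "topology (OP ?F c)"
  have "topspace ?X \<approx> Pow ?F" using topsp[OF assms(2)] by simp
  moreover have "crowded ?X" by (rule crowdedX[OF assms(2) c])
  moreover have "t1_space ?X" by (rule t1X[OF assms(2) c])
  moreover have "regular_space ?X" by (rule regX[OF assms(2) c])
  moreover have "deep_pi_base r ?X {NB ?F c T p | T p. T \<lesssim> ?F \<and> p \<in> Pow ?F}"
    by (rule deepX[OF assms(2) c assms(1) refl])
  ultimately show ?thesis by blast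
qed

end
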